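(* Let $G$ be a finite simple graph and let $D$ be an open irredundant dominating set of $G$. Then for any finite simple graph $H$, the set $D \times V(H)$ is an open irredundant, minimal dominating set of the Cartesian product $G \,\square\, H$.
   Context: For $u\in A\subseteq V(G)$, the external private neighborhood of $u$ with respect to $A$ is $\mathrm{epn}[u,A]=N(u)-N[A-\{u\}]$, the set of vertices outside $A$ adjacent to $u$ and to no other vertex of $A$. A set $A$ is open irredundant if $\mathrm{epn}[u,A]\neq\emptyset$ for every $u\in A$. The Cartesian product $G\,\square\, H$ has vertex set $V(G)\times V(H)$, with $(g_1,h_1)$ adjacent to $(g_2,h_2)$ iff either ($g_1=g_2$ and $h_1h_2\in E(H)$) or ($h_1=h_2$ and $g_1g_2\in E(G)$). *)

theory Defs
  imports Main
begin

definition simple_graph :: "'a set \<Rightarrow> ('a \<Rightarrow> 'a \<Rightarrow> bool) \<Rightarrow> bool" where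
  "simple_graph V E \<longleftrightarrow> finite V \<and> (\<forall>x y. E x y \<longrightarrow> x \<in> V \<and> y \<in> V)
     \<and> (\<forall>x y. E x y \<longrightarrow> E y x) \<and> (\<forall>x. \<not> E x x)"

definition open_nbhd :: "'a set \<Rightarrow> ('a \<Rightarrow> 'a \<Rightarrow> bool) \<Rightarrow> 'a \<Rightarrow> 'a set" where
  "open_nbhd V E u = {v \<in> V. E u v}"

definition closed_nbhd_set :: "'a set \<Rightarrow> ('a \<Rightarrow> 'a \<Rightarrow> bool) \<Rightarrow> 'a set \<Rightarrow> 'a set" where
  "closed_nbhd_set V E A = (\<Union>u\<in>A. insert u (open_nbhd V E u))"

definition epn :: "'a set \<Rightarrow> ('a \<Rightarrow> 'a \<Rightarrow> bool) \<Rightarrow> 'a \<Rightarrow> 'a set \<Rightarrow> 'a set" where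
  "epn V E u A = open_nbhd V E u - closed_nbhd_set V E (A - {u})"

definition open_irredundant :: "'a set \<Rightarrow> ('a \<Rightarrow> 'a \<Rightarrow> bool) \<Rightarrow> 'a set \<Rightarrow> bool" where
  "open_irredundant V E A \<longleftrightarrow> A \<subseteq> V \<and> (\<forall>u\<in>A. epn V E u A \<noteq> {})"

definition dominating :: "'a set \<Rightarrow> ('a \<Rightarrow> 'a \<Rightarrow> bool) \<Rightarrow> 'a set \<Rightarrow> bool" where
  "dominating V E D \<longleftrightarrow> D \<subseteq> V \<and> V \<subseteq> closed_nbhd_set V E D"

definition minimal_dominating :: "'a set \<Rightarrow> ('a \<Rightarrow> 'a \<Rightarrow> bool) \<Rightarrow> 'a set \<Rightarrow> bool" where
  "minimal_dominating V E D \<longleftrightarrow> dominating V E D \<and> (\<forall>D'. D' \<subset> D \<longrightarrow> \<not> dominating V E D')"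

definition cart_adj :: "('a \<Rightarrow> 'a \<Rightarrow> bool) \<Rightarrow> ('b \<Rightarrow> 'b \<Rightarrow> bool) \<Rightarrow> 'a \<times> 'b \<Rightarrow> 'a \<times> 'b \<Rightarrow> bool" where
  "cart_adj EG EH p q \<longleftrightarrow>
     (fst p = fst q \<and> EH (snd p) (snd q)) \<or> (snd p = snd q \<and> EG (fst p) (fst q))"

end

theory Submission
  imports Defs
begin

theorem lemma14:
  fixes VG :: "'a set" and EG :: "'a \<Rightarrow> 'a \<Rightarrow> bool"
    and VH :: "'b set" and EH :: "'b \<Rightarrow> 'b \<Rightarrow> bool" and D :: "'a set"
  assumes "simple_graph VG EG"
    and "open_irredundant VG EG D"
    and "dominating VG EG D"
    and "simple_graph VH EH"
  shows "open_irredundant (VG \<times> VH) (cart_adj EG EH) (D \<times> VH)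
       \<and> minimal_dominating (VG \<times> VH) (cart_adj EG EH) (D \<times> VH)"
proof -
  have DV: "D \<subseteq> VG" using assms(2) unfolding open_irredundant_def by blast
  have irr: "\<not> EG x x" for x using assms(1) unfolding simple_graph_def by blast
  have sym: "EG x y \<Longrightarrow> EG y x" for x y using assms(1) unfolding simple_graph_def by blast
  have key: "\<exists>w. (w,h) \<in> epn (VG \<times> VH) (cart_adj EG EH) (u,h) (D \<times> VH)"
    if u: "u \<in> D" and h: "h \<in> VH" for u h
  proof -
    obtain w where w: "w \<in> epn VG EG u D" using assms(2) u unfolding open_irredundant_def by blast
    hence wV: "w \<in> VG" and uw: "EG u w" and wn: "w \<notin> closed_nbhd_set VG EG (D - {u})"
      unfolding epn_def open_nbhd_def by auto
    have wD: "w \<notin> D" using wn uw irr unfolding closed_nbhd_set_def by auto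
    have "(w,h) \<in> epn (VG \<times> VH) (cart_adj EG EH) (u,h) (D \<times> VH)"
    proof -
      have "(w,h) \<in> open_nbhd (VG \<times> VH) (cart_adj EG EH) (u,h)"
        using wV h uw unfolding open_nbhd_def cart_adj_def by auto
      moreover have "(w,h) \<notin> closed_nbhd_set (VG \<times> VH) (cart_adj EG EH) (D \<times> VH - {(u,h)})"
      proof
        assume "(w,h) \<in> closed_nbhd_set (VG \<times> VH) (cart_adj EG EH) (D \<times> VH - {(u,h)})"
        then obtain u' h' where q: "(u',h') \<in> D \<times> VH - {(u,h)}"
          and c: "(w,h) = (u',h') \<or> cart_adj EG EH (u',h') (w,h)"
          unfolding closed_nbhd_set_def open_nbhd_def by auto
        show False
        proof (cases "(w,h) = (u',h')")
          case True then show ?thesis using q wD by auto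
        next
          case False
          hence "cart_adj EG EH (u',h') (w,h)" using c by auto
          hence "(u' = w) \<or> (h' = h \<and> EG u' w)" unfolding cart_adj_def by auto
          then show ?thesis
          proof
            assume "u' = w" then show False using q wD by auto
          next
            assume a: "h' = h \<and> EG u' w"
            hence "u' \<in> D - {u}" using q by auto
            hence "w \<in> closed_nbhd_set VG EG (D - {u})"
              using a wV unfolding closed_nbhd_set_def open_nbhd_def by auto
            then show False using wn by auto
          qed
        qed
      qed
      ultimately show ?thesis unfolding epn_def by auto
    qed
    then show ?thesis by blast
  qed
  have OI: "open_irredundant (VG \<times> VH) (cart_adj EG EH) (D \<times> VH)"
    unfolding open_irredundant_def using DV key by fastforce
  have DOM: "dominating (VG \<times> VH) (cart_adj EG EH) (D \<times> VH)"
    unfolding dominating_def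
  proof
    show "D \<times> VH \<subseteq> VG \<times> VH" using DV by auto
    show "VG \<times> VH \<subseteq> closed_nbhd_set (VG \<times> VH) (cart_adj EG EH) (D \<times> VH)"
    proof
      fix p assume p: "p \<in> VG \<times> VH"
      then obtain g h where gh: "p = (g,h)" "g \<in> VG" "h \<in> VH" by auto
      then obtain d where d: "d \<in> D" "g = d \<or> EG d g"
        using assms(3) unfolding dominating_def closed_nbhd_set_def open_nbhd_def by auto
      show "p \<in> closed_nbhd_set (VG \<times> VH) (cart_adj EG EH) (D \<times> VH)"
        unfolding closed_nbhd_set_def open_nbhd_def cart_adj_def
        using d gh by (intro UN_I[of "(d,h)"]) auto
    qed
  qed
  have MIN: "\<not> dominating (VG \<times> VH) (cart_adj EG EH) D'" if sub: "D' \<subset> D \<times> VH" for D'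
  proof
    assume dom: "dominating (VG \<times> VH) (cart_adj EG EH) D'"
    obtain u h where uh: "(u,h) \<in> D \<times> VH" "(u,h) \<notin> D'" using sub by auto
    obtain w where w: "(w,h) \<in> epn (VG \<times> VH) (cart_adj EG EH) (u,h) (D \<times> VH)"
      using key uh by auto
    hence "(w,h) \<in> VG \<times> VH" unfolding epn_def open_nbhd_def by auto
    hence "(w,h) \<in> closed_nbhd_set (VG \<times> VH) (cart_adj EG EH) D'"
      using dom unfolding dominating_def by auto
    moreover have "D' \<subseteq> D \<times> VH - {(u,h)}" using sub uh by auto
    ultimately have "(w,h) \<in> closed_nbhd_set (VG \<times> VH) (cart_adj EG EH) (D \<times> VH - {(u,h)})"
      unfolding closed_nbhd_set_def by blast
    then show False using w unfolding epn_def by auto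
  qed
  show ?thesis using OI DOM MIN unfolding minimal_dominating_def by blast
qed

end
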